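(* Let $N>0$, $m>0$, $w\geq 0$, $\alpha>0$ and let $y,t,L,L_g,g$ be real numbers with $L+L_g>0$. Let $p:[0,N]\to(0,\infty)$ be an integrable function that attains its maximum and its minimum on $[0,N]$, and suppose that for every $i\in[0,N]$ \[ \int_0^N \ln\left[\frac{p(i)}{p(j)}\right]p(j)\,dj + \frac{p(i)-mw}{p(i)}\int_0^N p(j)\,dj = \alpha(y-t) + \frac{\alpha g}{L+L_g}\int_0^N p(j)\,dj . \] Then $p$ is constant on $[0,N]$, i.e. there is $p_0$ with $p(i)=p_0$ for all $i\in[0,N]$.
   Context: This is the first-order condition for profit maximization of firm $i$ in a monopolistic-competition model with a continuum $[0,N]$ of firms, each producing one variety $i$ with labor input $l=F+mq$, nominal wage $w$, consumers with CARA partial utility $u(q)=k-\kappa e^{-\alpha q}$, income $y$, tax $t$, $L$ privately employed and $L_g$ governmentally employed workers, and a government purchase $g(i)=g$ of every variety $i$ (the same for all varieties). *)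

theory Defs
  imports "HOL-Analysis.Analysis"
begin

end

theory Submission
  imports Defs
begin

theorem proposition1:
  fixes N m w \<alpha> y t L Lg g :: real and p :: "real \<Rightarrow> real"
  assumes "N > 0" and "m > 0" and "w \<ge> 0" and "\<alpha> > 0" and "L + Lg > 0"
    and pos: "\<forall>i\<in>{0..N}. p i > 0"
    and integ: "set_integrable lborel {0..N} p"
    and hasmax: "\<exists>i0\<in>{0..N}. \<forall>i\<in>{0..N}. p i \<le> p i0"
    and hasmin: "\<exists>i0\<in>{0..N}. \<forall>i\<in>{0..N}. p i0 \<le> p i"
    and foc: "\<forall>i\<in>{0..N}.
      (LINT j:{0..N}|lborel. ln (p i / p j) * p j)
        + (p i - m * w) / p i * (LINT j:{0..N}|lborel. p j)
      = \<alpha> * (y - t) + \<alpha> * g / (L + Lg) * (LINT j:{0..N}|lborel. p j)"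
  shows "\<exists>p0. \<forall>i\<in>{0..N}. p i = p0"
proof -
  define A where "A = {0..N}"
  obtain imax where imax: "imax \<in> A" "\<forall>i\<in>A. p i \<le> p imax" using hasmax A_def by auto
  obtain imin where imin: "imin \<in> A" "\<forall>i\<in>A. p imin \<le> p i" using hasmin A_def by auto
  define a where "a = p imin"
  define b where "b = p imax"
  have a0: "a > 0" using pos imin A_def a_def by auto
  have ab: "\<And>j. j \<in> A \<Longrightarrow> a \<le> p j \<and> p j \<le> b" using imin imax a_def b_def by auto
  have intA: "set_integrable lborel A p" using integ A_def by simp
  have Asets: "A \<in> sets lborel" unfolding A_def by simp
  have mip: "(\<lambda>x. indicator A x *\<^sub>R p x) \<in> borel_measurable lborel"
    using intA unfolding set_integrable_def by (rule borel_measurable_integrable)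
  define q where "q j = indicator A j * p j + (1 - indicator A j)" for j :: real
  have qm: "q \<in> borel_measurable lborel" unfolding q_def using mip Asets by simp
  have qA: "\<And>j. j \<in> A \<Longrightarrow> q j = p j" unfolding q_def by simp
  have intg: "set_integrable lborel A (\<lambda>j. ln (p k / p j) * p j)" if kA: "k \<in> A" for k
  proof (rule set_integrable_bound[OF set_integrable_mult_right[OF intA, of "\<bar>ln (p k)\<bar> + \<bar>ln a\<bar> + \<bar>ln b\<bar>"]])
    have "(\<lambda>x. indicator A x *\<^sub>R (ln (p k / q x) * q x)) \<in> borel_measurable lborel"
      using qm Asets by simp
    moreover have "(\<lambda>x. indicator A x *\<^sub>R (ln (p k / q x) * q x)) = (\<lambda>x. indicator A x *\<^sub>R (ln (p k / p x) * p x))"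
      using qA by (auto simp: indicator_def)
    ultimately show "set_borel_measurable lborel A (\<lambda>j. ln (p k / p j) * p j)"
      unfolding set_borel_measurable_def by simp
    show "AE x in lborel. x \<in> A \<longrightarrow> norm (ln (p k / p x) * p x) \<le> norm ((\<bar>ln (p k)\<bar> + \<bar>ln a\<bar> + \<bar>ln b\<bar>) * p x)"
    proof (rule AE_I2, intro impI)
      fix x assume xA: "x \<in> A"
      have px: "p x > 0" "p k > 0" using ab[OF xA] ab[OF kA] a0 by auto
      have l1: "ln a \<le> ln (p x)" "ln (p x) \<le> ln b" using ab[OF xA] a0 by auto
      have "\<bar>ln (p k / p x)\<bar> \<le> \<bar>ln (p k)\<bar> + \<bar>ln a\<bar> + \<bar>ln b\<bar>"
        using px l1 by (simp add: ln_div)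
      then show "norm (ln (p k / p x) * p x) \<le> norm ((\<bar>ln (p k)\<bar> + \<bar>ln a\<bar> + \<bar>ln b\<bar>) * p x)"
        using px by (simp add: abs_mult mult_right_mono)
    qed
  qed
  define P where "P = (LINT j:A|lborel. p j)"
  have constint: "set_integrable lborel A (\<lambda>_. a)"
  proof (rule set_integrable_bound[OF intA])
    show "set_borel_measurable lborel A (\<lambda>_. a)" unfolding set_borel_measurable_def using Asets by simp
    show "AE x in lborel. x \<in> A \<longrightarrow> norm a \<le> norm (p x)" using ab a0 by (intro AE_I2) force
  qed
  have "(LINT j:A|lborel. a) \<le> P" unfolding P_def
    by (rule set_integral_mono[OF constint intA]) (use ab in auto)
  moreover have "(LINT j:A|lborel. a) = N * a" using Asets \<open>N > 0\<close>
    by (subst set_integral_const) (auto simp: A_def)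
  ultimately have P0: "P > 0" using a0 \<open>N > 0\<close> by (smt (verit) mult_pos_pos)
  define h where "h x = P * ln x - m * w * P / x" for x
  have key: "h (p i) = h (p k)" if iA: "i \<in> A" and kA: "k \<in> A" for i k
  proof -
    have pi: "p i > 0" "p k > 0" using ab iA kA a0 by force+
    have split: "(LINT j:A|lborel. ln (p i / p j) * p j) = ln (p i / p k) * P + (LINT j:A|lborel. ln (p k / p j) * p j)"
    proof -
      have "(LINT j:A|lborel. ln (p i / p j) * p j) = (LINT j:A|lborel. ln (p i / p k) * p j + ln (p k / p j) * p j)"
      proof (rule set_lebesgue_integral_cong[OF Asets], intro allI impI)
        fix j assume "j \<in> A"
        then have "p j > 0" using ab a0 by force
        then show "ln (p i / p j) * p j = ln (p i / p k) * p j + ln (p k / p j) * p j"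
          using pi by (simp add: ln_div algebra_simps)
      qed
      also have "\<dots> = (LINT j:A|lborel. ln (p i / p k) * p j) + (LINT j:A|lborel. ln (p k / p j) * p j)"
        by (rule set_integral_add(2)[OF set_integrable_mult_right[OF intA] intg[OF kA]])
      finally show ?thesis unfolding P_def by simp
    qed
    have fi: "(LINT j:A|lborel. ln (p i / p j) * p j) + (p i - m * w) / p i * P
      = (LINT j:A|lborel. ln (p k / p j) * p j) + (p k - m * w) / p k * P"
      using foc iA kA unfolding A_def P_def by auto
    have "(p i - m * w) / p i * P = P - m * w * P / p i" using pi by (simp add: field_simps)
    moreover have "(p k - m * w) / p k * P = P - m * w * P / p k" using pi by (simp add: field_simps)
    ultimately show ?thesis using fi split pi unfolding h_def by (simp add: ln_div algebra_simps)
  qed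
  have mono: "h x < h z" if "0 < x" "x < z" for x z
  proof -
    have "ln x < ln z" using that by simp
    then have "P * ln x < P * ln z" using P0 by simp
    moreover have "m * w * P / z \<le> m * w * P / x"
      using that P0 \<open>m > 0\<close> \<open>w \<ge> 0\<close> by (intro divide_left_mono) auto
    ultimately show ?thesis unfolding h_def by linarith
  qed
  show ?thesis
  proof (intro exI ballI)
    fix i assume "i \<in> {0..N}"
    then have iA: "i \<in> A" using A_def by simp
    have "0 \<in> A" using A_def \<open>N > 0\<close> by simp
    have pos2: "p i > 0" "p 0 > 0" using ab iA \<open>0 \<in> A\<close> a0 by force+
    show "p i = p 0"
    proof (rule ccontr)
      assume "p i \<noteq> p 0"
      then have "p i < p 0 \<or> p 0 < p i" by linarith
      then show False using mono pos2 key[OF iA \<open>0 \<in> A\<close>] by force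
    qed
  qed
qed

end
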